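(* For every positive integer $n$, $N'(n,1,0)=n$.
   Context: $\mathbb{Z}_4$ is the ring of integers modulo $4$; a $\mathbb{Z}_4$-code of length $n$ is a $\mathbb{Z}_4$-submodule of $\mathbb{Z}_4^n$. Two codes are equivalent if one is obtained from the other by permuting coordinates and changing the signs of some coordinates. Every $\mathbb{Z}_4$-code is permutation-equivalent to one with generator matrix $\begin{pmatrix} I_{k_1} & A & B \\ O & 2I_{k_2} & 2D\end{pmatrix}$ with $A,D$ $(0,1)$-matrices and $B$ a $\mathbb{Z}_4$-matrix; the code then has type $4^{k_1}2^{k_2}$. The trivial extension of a code $C$ of length $n-1$ is $\{(c,0)\mid c\in C\}$ (the only code of length $0$ is the zero code). $N'(n,k_1,k_2)$ denotes the number of equivalence classes of $\mathbb{Z}_4$-codes of length $n$ and type $4^{k_1}2^{k_2}$ that are not equivalent to the trivial extension of any $\mathbb{Z}_4$-code of length $n-1$. *)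

theory Defs
  imports Main "HOL-Combinatorics.Permutations"
begin

text \<open>Vectors of length n over Z4: functions nat => int with entries in {0..3}
  on coordinates 0..n-1 and 0 elsewhere.\<close>

definition Z4vec :: "nat \<Rightarrow> (nat \<Rightarrow> int) set" where
  "Z4vec n = {v. \<forall>i. (i < n \<longrightarrow> v i \<in> {0..3}) \<and> (n \<le> i \<longrightarrow> v i = 0)}"

definition z4add :: "(nat \<Rightarrow> int) \<Rightarrow> (nat \<Rightarrow> int) \<Rightarrow> (nat \<Rightarrow> int)" where
  "z4add u v = (\<lambda>i. (u i + v i) mod 4)"

definition z4smult :: "int \<Rightarrow> (nat \<Rightarrow> int) \<Rightarrow> (nat \<Rightarrow> int)" where
  "z4smult a v = (\<lambda>i. (a * v i) mod 4)"

definition is_code :: "nat \<Rightarrow> (nat \<Rightarrow> int) set \<Rightarrow> bool" where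
  "is_code n C \<longleftrightarrow> C \<subseteq> Z4vec n \<and> (\<lambda>_. 0) \<in> C \<and>
     (\<forall>u\<in>C. \<forall>v\<in>C. z4add u v \<in> C) \<and> (\<forall>a. \<forall>v\<in>C. z4smult a v \<in> C)"

definition z4span :: "nat \<Rightarrow> (nat \<Rightarrow> nat \<Rightarrow> int) \<Rightarrow> (nat \<Rightarrow> int) set" where
  "z4span m r = {(\<lambda>i. (\<Sum>j<m. c j * r j i) mod 4) | c. True}"

text \<open>Rows of the standard-form generator matrix
  ( I_k1  A     B  )
  ( O     2I_k2 2D )  of length n.\<close>
definition std_gen :: "nat \<Rightarrow> nat \<Rightarrow> nat \<Rightarrow> (nat \<Rightarrow> nat \<Rightarrow> int) \<Rightarrow> (nat \<Rightarrow> nat \<Rightarrow> int)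
    \<Rightarrow> (nat \<Rightarrow> nat \<Rightarrow> int) \<Rightarrow> nat \<Rightarrow> nat \<Rightarrow> int" where
  "std_gen n k1 k2 A B D j i =
     (if i \<ge> n then 0
      else if j < k1 then
        (if i < k1 then (if i = j then 1 else 0)
         else if i < k1 + k2 then A j (i - k1)
         else B j (i - k1 - k2))
      else
        (if i < k1 then 0
         else if i < k1 + k2 then (if i - k1 = j - k1 then 2 else 0)
         else 2 * D (j - k1) (i - k1 - k2)))"

definition perm_code :: "(nat \<Rightarrow> nat) \<Rightarrow> (nat \<Rightarrow> int) set \<Rightarrow> (nat \<Rightarrow> int) set" where
  "perm_code \<sigma> C = (\<lambda>v. v \<circ> \<sigma>) ` C"

text \<open>C (a code of length n) has type 4^k1 2^k2: it is permutation-equivalent to the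
  code generated by a standard-form matrix with A, D (0,1)-matrices, B a Z4-matrix.\<close>
definition has_type :: "nat \<Rightarrow> (nat \<Rightarrow> int) set \<Rightarrow> nat \<Rightarrow> nat \<Rightarrow> bool" where
  "has_type n C k1 k2 \<longleftrightarrow> k1 + k2 \<le> n \<and>
     (\<exists>\<sigma> A B D. \<sigma> permutes {..<n} \<and>
        (\<forall>j i. A j i \<in> {0,1}) \<and> (\<forall>j i. B j i \<in> {0..3}) \<and> (\<forall>j i. D j i \<in> {0,1}) \<and>
        perm_code \<sigma> C = z4span (k1 + k2) (std_gen n k1 k2 A B D))"

definition code_equiv :: "nat \<Rightarrow> (nat \<Rightarrow> int) set \<Rightarrow> (nat \<Rightarrow> int) set \<Rightarrow> bool" where
  "code_equiv n C D \<longleftrightarrow> (\<exists>\<sigma> s. \<sigma> permutes {..<n} \<and> (\<forall>i. s i \<in> {1, -1}) \<and>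
      D = (\<lambda>v. \<lambda>i. (s i * v (\<sigma> i)) mod 4) ` C)"

definition triv_ext :: "nat \<Rightarrow> (nat \<Rightarrow> int) set \<Rightarrow> (nat \<Rightarrow> int) set" where
  "triv_ext m C = (\<lambda>c. c(m := 0)) ` C"

definition nontriv_codes :: "nat \<Rightarrow> nat \<Rightarrow> nat \<Rightarrow> (nat \<Rightarrow> int) set set" where
  "nontriv_codes n k1 k2 = {C. is_code n C \<and> has_type n C k1 k2 \<and>
      \<not> (\<exists>C'. is_code (n - 1) C' \<and> code_equiv n C (triv_ext (n - 1) C'))}"

definition Nprime :: "nat \<Rightarrow> nat \<Rightarrow> nat \<Rightarrow> nat" where
  "Nprime n k1 k2 = card (nontriv_codes n k1 k2 //
      {(C, D). C \<in> nontriv_codes n k1 k2 \<and> D \<in> nontriv_codes n k1 k2 \<and> code_equiv n C D})"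

end

theory Submission
  imports Defs
begin

definition mlt :: "(nat \<Rightarrow> int) \<Rightarrow> (nat \<Rightarrow> int) set" where
  "mlt w = range (\<lambda>k::int. \<lambda>i. (k * w i) mod 4)"

definition Ev :: "nat \<Rightarrow> (nat \<Rightarrow> int) \<Rightarrow> nat set" where
  "Ev n w = {i. i < n \<and> even (w i)}"

definition good :: "nat \<Rightarrow> (nat \<Rightarrow> int) \<Rightarrow> bool" where
  "good n w \<longleftrightarrow> w \<in> Z4vec n \<and> (\<forall>i<n. w i \<noteq> 0) \<and> (\<exists>i<n. odd (w i))"

lemma even_mod4: "even ((x::int) mod 4) \<longleftrightarrow> even x"
  by presburger

lemma even_sign: "s \<in> {1, -1} \<Longrightarrow> even ((s::int) * x) \<longleftrightarrow> even x"
  by auto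

lemma phi_mult:
  "(\<lambda>v. \<lambda>i. (s i * v (\<sigma> i)) mod 4) ` mlt w = mlt (\<lambda>i. (s i * w (\<sigma> i)) mod 4)"
proof -
  have "\<And>k. (\<lambda>i. (s i * ((k * w (\<sigma> i)) mod 4)) mod (4::int)) = (\<lambda>i. (k * ((s i * w (\<sigma> i)) mod 4)) mod 4)"
    by (simp add: mod_mult_right_eq mult.left_commute)
  then show ?thesis unfolding mlt_def image_image by simp
qed

lemma z4vec_range: "w \<in> Z4vec n \<Longrightarrow> 0 \<le> w i \<and> w i \<le> 3"
proof -
  assume a: "w \<in> Z4vec n"
  then have h: "(i < n \<longrightarrow> w i \<in> {0..3}) \<and> (n \<le> i \<longrightarrow> w i = 0)" unfolding Z4vec_def by blast
  show ?thesis
  proof (cases "i < n")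
    case True then show ?thesis using h by simp
  next
    case False then show ?thesis using h by simp
  qed
qed

lemma mem_mult_self: "w \<in> Z4vec n \<Longrightarrow> w \<in> mlt w"
proof -
  assume a: "w \<in> Z4vec n"
  have "w = (\<lambda>i. (1 * w i) mod 4)"
  proof
    fix i show "w i = (1 * w i) mod 4" using z4vec_range[OF a, of i] by simp
  qed
  then show ?thesis unfolding mlt_def by (rule range_eqI)
qed

lemma is_code_mult: "w \<in> Z4vec m \<Longrightarrow> is_code m (mlt w)"
proof -
  assume a: "w \<in> Z4vec m"
  have sub: "mlt w \<subseteq> Z4vec m"
    using a unfolding mlt_def Z4vec_def by auto
  have z: "(\<lambda>_. 0) \<in> mlt w" unfolding mlt_def
    by (rule range_eqI[of _ _ 0]) simp
  have add: "z4add u v \<in> mlt w" if u: "u \<in> mlt w" and v: "v \<in> mlt w" for u v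
  proof -
    obtain k1 where "u = (\<lambda>i. (k1 * w i) mod 4)"
      using u unfolding mlt_def by blast
    moreover obtain k2 where "v = (\<lambda>i. (k2 * w i) mod 4)"
      using v unfolding mlt_def by blast
    ultimately have "z4add u v = (\<lambda>i. ((k1 + k2) * w i) mod 4)"
      unfolding z4add_def by (auto simp: mod_add_eq distrib_right)
    then show ?thesis unfolding mlt_def by auto
  qed
  have sm: "z4smult a v \<in> mlt w" if v: "v \<in> mlt w" for a v
  proof -
    obtain k where "v = (\<lambda>i. (k * w i) mod 4)"
      using v unfolding mlt_def by blast
    then have "z4smult a v = (\<lambda>i. ((a * k) * w i) mod 4)"
      unfolding z4smult_def by (auto simp: mod_mult_right_eq mult.assoc)
    then show ?thesis unfolding mlt_def by auto
  qed
  show ?thesis unfolding is_code_def using sub z add sm by blast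
qed


lemma perm_exists:
  assumes "finite S" "A \<subseteq> S" "B \<subseteq> S" "card A = card B"
  shows "\<exists>\<sigma>. \<sigma> permutes S \<and> (\<forall>x\<in>A. \<sigma> x \<in> B) \<and> (\<forall>x\<in>S-A. \<sigma> x \<in> S-B)"
proof -
  have fA: "finite A" "finite B" using assms finite_subset by auto
  obtain h1 where h1: "bij_betw h1 A B" using finite_same_card_bij fA assms(4) by blast
  have "card (S-A) = card (S-B)" using assms fA by (simp add: card_Diff_subset)
  then obtain h2 where h2: "bij_betw h2 (S-A) (S-B)"
    using finite_same_card_bij assms(1) by (meson finite_Diff)
  define \<sigma> where "\<sigma> x = (if x \<in> A then h1 x else if x \<in> S then h2 x else x)" for x
  have b1: "bij_betw \<sigma> A B" using h1 by (rule bij_betw_cong[THEN iffD1, rotated]) (simp add: \<sigma>_def)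
  have b2: "bij_betw \<sigma> (S-A) (S-B)" using h2 by (rule bij_betw_cong[THEN iffD1, rotated]) (simp add: \<sigma>_def)
  have "bij_betw \<sigma> (A \<union> (S-A)) (B \<union> (S-B))" using b1 b2 by (rule bij_betw_combine) auto
  moreover have "A \<union> (S-A) = S" "B \<union> (S-B) = S" using assms by auto
  ultimately have "bij_betw \<sigma> S S" by simp
  then have "\<sigma> permutes S" by (rule bij_imp_permutes) (use assms in \<open>auto simp: \<sigma>_def\<close>)
  moreover have "\<forall>x\<in>A. \<sigma> x \<in> B" using b1 by (auto simp: bij_betw_def)
  moreover have "\<forall>x\<in>S-A. \<sigma> x \<in> S-B" using b2 by (auto simp: bij_betw_def)
  ultimately show ?thesis by blast
qed

lemma z4vec_vals: "w \<in> Z4vec n \<Longrightarrow> i < n \<Longrightarrow> w i \<noteq> 0 \<Longrightarrow> w i = 1 \<or> w i = 2 \<or> w i = 3"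
  unfolding Z4vec_def by auto

lemma mkTriv:
  assumes w: "w \<in> Z4vec n" and j: "j < n" "w j = 0"
  shows "\<exists>C'. is_code (n-1) C' \<and> code_equiv n (mlt w) (triv_ext (n-1) C')"
proof -
  define \<tau> where "\<tau> = transpose j (n-1)"
  define s :: "nat \<Rightarrow> int" where "s = (\<lambda>_. 1)"
  define w' where "w' = (\<lambda>i. (s i * w (\<tau> i)) mod 4)"
  have tp: "\<tau> permutes {..<n}" unfolding \<tau>_def using j by (intro permutes_swap_id) auto
  have w'n: "w' (n-1) = 0" using j by (simp add: w'_def \<tau>_def s_def)
  have wz: "w' \<in> Z4vec (n-1)"
    unfolding Z4vec_def
  proof (intro CollectI allI conjI impI)
    fix i assume "i < n - 1" then show "w' i \<in> {0..3}" by (simp add: w'_def)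
  next
    fix i assume i: "n - 1 \<le> i"
    show "w' i = 0"
    proof (cases "i = n - 1")
      case True then show ?thesis using w'n by simp
    next
      case False
      then have "i \<ge> n" "i \<noteq> j" using i j by auto
      then have "\<tau> i = i" unfolding \<tau>_def using False by (simp add: transpose_apply_other)
      then show ?thesis using w \<open>i \<ge> n\<close> by (simp add: w'_def Z4vec_def)
    qed
  qed
  have c0: "c (n-1) = 0" if "c \<in> mlt w'" for c
    using that w'n by (auto simp: mlt_def)
  have "(\<lambda>c. c(n-1:=0)) ` mlt w' = (\<lambda>c. c) ` mlt w'"
  proof (rule image_cong)
    fix x assume "x \<in> mlt w'" then show "x(n-1:=0) = x" by (rule fun_upd_idem[OF c0])
  qed simp
  then have te: "triv_ext (n-1) (mlt w') = mlt w'" by (simp add: triv_ext_def)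
  have "code_equiv n (mlt w) (triv_ext (n-1) (mlt w'))"
    unfolding code_equiv_def te
  proof (rule exI[of _ \<tau>], rule exI[of _ s], intro conjI)
    show "mlt w' = (\<lambda>v i. (s i * v (\<tau> i)) mod 4) ` mlt w" by (simp only: phi_mult w'_def)
  qed (use tp in \<open>auto simp: s_def\<close>)
  then show ?thesis using is_code_mult[OF wz] by blast
qed

lemma notTriv:
  assumes w: "w \<in> Z4vec n" and nz: "\<forall>i<n. w i \<noteq> 0" and n: "n \<ge> 1"
  shows "\<not> (\<exists>C'. is_code (n-1) C' \<and> code_equiv n (mlt w) (triv_ext (n-1) C'))"
proof
  assume "\<exists>C'. is_code (n-1) C' \<and> code_equiv n (mlt w) (triv_ext (n-1) C')"
  then obtain C' \<sigma> s where p: "\<sigma> permutes {..<n}" and s: "\<forall>i. s i \<in> {1, -1}"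
    and eq: "triv_ext (n-1) C' = (\<lambda>v. \<lambda>i. (s i * v (\<sigma> i)) mod 4) ` mlt w"
    unfolding code_equiv_def by blast
  have "(\<lambda>i. (s i * w (\<sigma> i)) mod 4) \<in> triv_ext (n-1) C'"
    unfolding eq using mem_mult_self[OF w] by blast
  then obtain c where "(\<lambda>i. (s i * w (\<sigma> i)) mod 4) = c(n-1 := 0)"
    unfolding triv_ext_def by blast
  then have "(\<lambda>i. (s i * w (\<sigma> i)) mod 4) (n-1) = (c(n-1 := 0)) (n-1)" by (rule fun_cong)
  then have z: "(s (n-1) * w (\<sigma> (n-1))) mod 4 = 0" by simp
  have "\<sigma> (n-1) < n" using p n permutes_in_image[OF p, of "n-1"] by auto
  then have v: "w (\<sigma> (n-1)) = 1 \<or> w (\<sigma> (n-1)) = 2 \<or> w (\<sigma> (n-1)) = 3"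
    using z4vec_vals[OF w] nz by blast
  have "s (n-1) = 1 \<or> s (n-1) = -1" using s by auto
  then show False using v z by auto
qed

lemma z4span1: "z4span 1 r = mlt (r 0)"
  unfolding z4span_def mlt_def
proof (rule set_eqI, rule iffI)
  fix x assume "x \<in> {\<lambda>i. (\<Sum>j<1. c j * r j i) mod 4 |c. True}"
  then obtain c where "x = (\<lambda>i. (\<Sum>j<1. c j * r j i) mod 4)" by blast
  then have "x = (\<lambda>i. (c 0 * r 0 i) mod 4)" by simp
  then show "x \<in> range (\<lambda>k i. k * r 0 i mod 4)" by blast
next
  fix x assume "x \<in> range (\<lambda>k i. k * r 0 i mod 4)"
  then obtain k where x: "x = (\<lambda>i. (k * r 0 i) mod 4)" by blast
  show "x \<in> {\<lambda>i. (\<Sum>j<1. c j * r j i) mod 4 |c. True}"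
    by (rule CollectI, rule exI[of _ "\<lambda>_. k"]) (simp add: x)
qed


lemma structure_lem:
  assumes n: "n \<ge> 1" and C: "C \<in> nontriv_codes n 1 0"
  shows "\<exists>w. good n w \<and> C = mlt w"
proof -
  from C have ht: "has_type n C 1 0"
    and nt: "\<not> (\<exists>C'. is_code (n - 1) C' \<and> code_equiv n C (triv_ext (n - 1) C'))"
    unfolding nontriv_codes_def by auto
  then obtain \<sigma> A B D where p: "\<sigma> permutes {..<n}" and Br: "\<forall>j i. B j i \<in> {0..3}"
    and eq: "perm_code \<sigma> C = z4span (1 + 0) (std_gen n 1 0 A B D)"
    unfolding has_type_def by blast
  define g where "g = std_gen n 1 0 A B D 0"
  have eq2: "(\<lambda>v. v \<circ> \<sigma>) ` C = mlt g" using eq z4span1[of "std_gen n 1 0 A B D"] by (simp add: perm_code_def g_def)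
  have g03: "g i \<in> {0..3}" for i using Br unfolding g_def std_gen_def by auto
  have gn: "g i = 0" if "i \<ge> n" for i using that unfolding g_def std_gen_def by auto
  have g0: "g 0 = 1" using n unfolding g_def std_gen_def by auto
  define w where "w = (\<lambda>i. g (inv \<sigma> i))"
  have pinv: "inv \<sigma> permutes {..<n}" using p by (rule permutes_inv)
  have Cw: "C = mlt w"
  proof (rule set_eqI, rule iffI)
    fix v assume "v \<in> C"
    then have "v \<circ> \<sigma> \<in> mlt g" using eq2 by blast
    then obtain k where k: "v \<circ> \<sigma> = (\<lambda>i. (k * g i) mod 4)" unfolding mlt_def by blast
    have "v = (\<lambda>i. (k * w i) mod 4)"
    proof
      fix i have "v i = (v \<circ> \<sigma>) (inv \<sigma> i)" using permutes_inverses(1)[OF p] by simp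
      then show "v i = (k * w i) mod 4" using k unfolding w_def by simp
    qed
    then show "v \<in> mlt w" unfolding mlt_def by blast
  next
    fix x assume "x \<in> mlt w"
    then obtain k where x: "x = (\<lambda>i. (k * w i) mod 4)" unfolding mlt_def by blast
    have "(\<lambda>i. (k * g i) mod 4) \<in> mlt g" unfolding mlt_def by blast
    then obtain v where v: "v \<in> C" "(\<lambda>i. (k * g i) mod 4) = v \<circ> \<sigma>" using eq2 by blast
    have "v = x"
    proof
      fix i have "v i = (v \<circ> \<sigma>) (inv \<sigma> i)" using permutes_inverses(1)[OF p] by simp
      also have "\<dots> = x i" by (simp add: v(2)[symmetric] x w_def)
      finally show "v i = x i" .
    qed
    then show "x \<in> C" using v by simp
  qed
  have wz: "w \<in> Z4vec n" unfolding Z4vec_def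
  proof (intro CollectI allI conjI impI)
    fix i show "w i \<in> {0..3}" unfolding w_def by (rule g03)
  next
    fix i assume "n \<le> i"
    then have "inv \<sigma> i = i" using permutes_not_in[OF pinv] by auto
    then show "w i = 0" using gn \<open>n \<le> i\<close> unfolding w_def by simp
  qed
  have odd: "\<exists>i<n. odd (w i)"
  proof (intro exI conjI)
    show "\<sigma> 0 < n" using permutes_in_image[OF p, of 0] n by auto
    show "odd (w (\<sigma> 0))" unfolding w_def using permutes_inverses(2)[OF p] g0 by simp
  qed
  have nz: "\<forall>i<n. w i \<noteq> 0"
  proof (intro allI impI notI)
    fix i assume "i < n" "w i = 0"
    then show False using mkTriv[OF wz] nt Cw by blast
  qed
  show ?thesis using wz odd nz Cw unfolding good_def by blast
qed

lemma mem_mlt_mod: "(\<lambda>i. (x i) mod 4) \<in> mlt (\<lambda>i. (x i) mod 4)"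
proof -
  have "(\<lambda>i. (x i) mod (4::int)) = (\<lambda>i. (1 * ((x i) mod 4)) mod 4)" by simp
  then show ?thesis unfolding mlt_def by (rule range_eqI)
qed

lemma equiv_card:
  assumes ce: "code_equiv n (mlt w) (mlt w')" and wz: "w \<in> Z4vec n" and wz': "w' \<in> Z4vec n"
  shows "card (Ev n w) = card (Ev n w')"
proof -
  obtain \<sigma> s where p: "\<sigma> permutes {..<n}" and s: "\<forall>i. s i \<in> {1, -1}"
    and eq: "mlt w' = (\<lambda>v. \<lambda>i. (s i * v (\<sigma> i)) mod 4) ` mlt w"
    using ce unfolding code_equiv_def by blast
  define pw where "pw = (\<lambda>i. (s i * w (\<sigma> i)) mod 4)"
  have eq': "mlt w' = mlt pw" using eq by (simp add: phi_mult pw_def)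
  have "w' \<in> mlt pw" using mem_mult_self[OF wz'] eq' by simp
  then obtain k where k: "w' = (\<lambda>i. (k * pw i) mod 4)" unfolding mlt_def by blast
  have "pw \<in> mlt w'" using mem_mlt_mod[of "\<lambda>i. s i * w (\<sigma> i)"] eq' unfolding pw_def by simp
  then obtain k' where k': "pw = (\<lambda>i. (k' * w' i) mod 4)" unfolding mlt_def by blast
  have par: "even (w' i) \<longleftrightarrow> even (w (\<sigma> i))" for i
  proof -
    have a1: "even (pw i) \<longleftrightarrow> even (s i * w (\<sigma> i))" unfolding pw_def by (rule even_mod4)
    have a2: "even (s i * w (\<sigma> i)) \<longleftrightarrow> even (w (\<sigma> i))" by (rule even_sign[OF s[rule_format]])
    have a: "even (pw i) \<longleftrightarrow> even (w (\<sigma> i))" using a1 a2 by simp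
    have ki: "w' i = (k * pw i) mod 4" using k by (rule fun_cong)
    have ki': "pw i = (k' * w' i) mod 4" using k' by (rule fun_cong)
    have b: "even (pw i) \<Longrightarrow> even (w' i)" unfolding ki by (simp add: even_mod4)
    have c: "even (w' i) \<Longrightarrow> even (pw i)" unfolding ki' by (simp add: even_mod4)
    show ?thesis using a b c by blast
  qed
  have E': "Ev n w' = {i. i < n \<and> even (w (\<sigma> i))}" unfolding Ev_def using par by auto
  have img: "\<sigma> ` {i. i < n \<and> even (w (\<sigma> i))} = Ev n w"
  proof (rule set_eqI, rule iffI)
    fix x assume "x \<in> \<sigma> ` {i. i < n \<and> even (w (\<sigma> i))}"
    then show "x \<in> Ev n w" unfolding Ev_def using permutes_in_image[OF p] by auto
  next
    fix x assume x: "x \<in> Ev n w"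
    have "inv \<sigma> x < n" using x permutes_in_image[OF permutes_inv[OF p], of x] unfolding Ev_def by auto
    moreover have "\<sigma> (inv \<sigma> x) = x" using permutes_inverses(1)[OF p] .
    ultimately show "x \<in> \<sigma> ` {i. i < n \<and> even (w (\<sigma> i))}" using x unfolding Ev_def
      by (intro image_eqI[of x _ "inv \<sigma> x"]) auto
  qed
  have "card (Ev n w) = card {i. i < n \<and> even (w (\<sigma> i))}"
    unfolding img[symmetric] by (rule card_image) (rule permutes_inj_on[OF p])
  then show ?thesis using E' by simp
qed


lemma sign_fix:
  fixes a b :: int
  assumes "a = 1 \<or> a = 2 \<or> a = 3" "b = 1 \<or> b = 2 \<or> b = 3" "even a \<longleftrightarrow> even b"
  shows "((if a = b then 1 else -1) * a) mod 4 = b"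
  using assms by auto

lemma card_equiv:
  assumes g: "good n w" and g': "good n w'" and c: "card (Ev n w) = card (Ev n w')"
  shows "code_equiv n (mlt w) (mlt w')"
proof -
  have wz: "w \<in> Z4vec n" and nz: "\<forall>i<n. w i \<noteq> 0" using g unfolding good_def by auto
  have wz': "w' \<in> Z4vec n" and nz': "\<forall>i<n. w' i \<noteq> 0" using g' unfolding good_def by auto
  have sub: "Ev n w \<subseteq> {..<n}" "Ev n w' \<subseteq> {..<n}" unfolding Ev_def by auto
  obtain \<sigma> where p: "\<sigma> permutes {..<n}" and a1: "\<forall>x\<in>Ev n w'. \<sigma> x \<in> Ev n w"
    and a2: "\<forall>x\<in>{..<n} - Ev n w'. \<sigma> x \<in> {..<n} - Ev n w"
    using perm_exists[of "{..<n}" "Ev n w'" "Ev n w"] sub c by auto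
  define s :: "nat \<Rightarrow> int" where "s i = (if w (\<sigma> i) = w' i then 1 else -1)" for i
  have pw: "w' = (\<lambda>i. (s i * w (\<sigma> i)) mod 4)"
  proof
    fix i show "w' i = (s i * w (\<sigma> i)) mod 4"
    proof (cases "i < n")
      case False
      then have "\<sigma> i = i" using permutes_not_in[OF p] by auto
      then show ?thesis using False wz wz' unfolding Z4vec_def by auto
    next
      case True
      then have si: "\<sigma> i < n" using permutes_in_image[OF p] by auto
      have par: "even (w (\<sigma> i)) \<longleftrightarrow> even (w' i)"
        using a1 a2 True si unfolding Ev_def by auto
      show ?thesis unfolding s_def
        using sign_fix[OF z4vec_vals[OF wz si] z4vec_vals[OF wz' True] par] nz nz' True si by auto
    qed
  qed
  show ?thesis unfolding code_equiv_def
  proof (rule exI[of _ \<sigma>], rule exI[of _ s], intro conjI)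
    show "mlt w' = (\<lambda>v i. (s i * v (\<sigma> i)) mod 4) ` mlt w" by (subst pw) (simp only: phi_mult)
  qed (use p in \<open>auto simp: s_def\<close>)
qed

lemma Ev_less: "good n w \<Longrightarrow> card (Ev n w) < n"
proof -
  assume g: "good n w"
  then obtain i where i: "i < n" "odd (w i)" unfolding good_def by blast
  have "Ev n w \<subset> {..<n}" using i unfolding Ev_def by auto
  then have "card (Ev n w) < card {..<n}" by (rule psubset_card_mono[rotated]) simp
  then show ?thesis by simp
qed

definition K :: "nat \<Rightarrow> nat \<Rightarrow> nat \<Rightarrow> int" where
  "K n k i = (if i < n - k then 1 else if i < n then 2 else 0)"

lemma K_props:
  assumes k: "k < n"
  shows "good n (K n k)" "card (Ev n (K n k)) = k" "mlt (K n k) \<in> nontriv_codes n 1 0"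
proof -
  have kz: "K n k \<in> Z4vec n" unfolding Z4vec_def K_def by auto
  show g: "good n (K n k)" unfolding good_def
  proof (intro conjI)
    show "\<exists>i<n. odd (K n k i)" using k by (intro exI[of _ 0]) (auto simp: K_def)
  qed (use kz in \<open>auto simp: K_def\<close>)
  have "Ev n (K n k) = {n-k..<n}" unfolding Ev_def K_def by auto
  then show "card (Ev n (K n k)) = k" using k by simp
  have ic: "is_code n (mlt (K n k))" by (rule is_code_mult[OF kz])
  have sg: "std_gen n 1 0 (\<lambda>_ _. 0) (\<lambda>j i. K n k (i+1)) (\<lambda>_ _. 0) 0 = K n k"
  proof
    fix i show "std_gen n 1 0 (\<lambda>_ _. 0) (\<lambda>j i. K n k (i+1)) (\<lambda>_ _. 0) 0 i = K n k i"
      using k unfolding std_gen_def K_def by auto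
  qed
  have ht: "has_type n (mlt (K n k)) 1 0" unfolding has_type_def
  proof (intro conjI exI)
    show "1 + 0 \<le> n" using k by simp
    show "perm_code id (mlt (K n k)) = z4span (1 + 0) (std_gen n 1 0 (\<lambda>_ _. 0) (\<lambda>j i. K n k (i+1)) (\<lambda>_ _. 0))"
      using z4span1[of "std_gen n 1 0 (\<lambda>_ _. 0) (\<lambda>j i. K n k (i+1)) (\<lambda>_ _. 0)"] sg
      by (simp add: perm_code_def)
  qed (auto simp: K_def)
  have "\<not> (\<exists>C'. is_code (n-1) C' \<and> code_equiv n (mlt (K n k)) (triv_ext (n-1) C'))"
    using notTriv[OF kz] g k unfolding good_def by auto
  then show "mlt (K n k) \<in> nontriv_codes n 1 0" unfolding nontriv_codes_def using ic ht by blast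
qed

definition FF :: "nat \<Rightarrow> (nat \<Rightarrow> int) set \<Rightarrow> nat" where
  "FF n C = card {i. i < n \<and> (\<forall>u\<in>C. even (u i))}"

lemma FF_mlt: "w \<in> Z4vec n \<Longrightarrow> FF n (mlt w) = card (Ev n w)"
proof -
  assume wz: "w \<in> Z4vec n"
  have "{i. i < n \<and> (\<forall>u\<in>mlt w. even (u i))} = Ev n w"
  proof (rule set_eqI, rule iffI)
    fix i assume "i \<in> {i. i < n \<and> (\<forall>u\<in>mlt w. even (u i))}"
    then show "i \<in> Ev n w" using mem_mult_self[OF wz] unfolding Ev_def by auto
  next
    fix i assume "i \<in> Ev n w"
    then show "i \<in> {i. i < n \<and> (\<forall>u\<in>mlt w. even (u i))}"
      unfolding Ev_def mlt_def using even_mod4 by auto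
  qed
  then show ?thesis unfolding FF_def by simp
qed


theorem mainTheorem6:
  fixes n :: nat
  assumes "n \<ge> 1"
  shows "Nprime n 1 0 = n"
proof -
  define A where "A = nontriv_codes n 1 0"
  define R where "R = {(C, D). C \<in> A \<and> D \<in> A \<and> code_equiv n C D}"
  have key: "code_equiv n C D \<longleftrightarrow> FF n C = FF n D" if hC: "C \<in> A" and hD: "D \<in> A" for C D
  proof -
    obtain w where w: "good n w" "C = mlt w" using structure_lem[OF assms] hC A_def by blast
    obtain w' where w': "good n w'" "D = mlt w'" using structure_lem[OF assms] hD A_def by blast
    have z: "w \<in> Z4vec n" "w' \<in> Z4vec n" using w w' unfolding good_def by auto
    show ?thesis using equiv_card[OF _ z] card_equiv[OF w(1) w'(1)] FF_mlt[OF z(1)] FF_mlt[OF z(2)] w w'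
      by auto
  qed
  have rng: "FF n ` A = {..<n}"
  proof (rule set_eqI, rule iffI)
    fix k assume "k \<in> FF n ` A"
    then obtain C where C: "C \<in> A" "k = FF n C" by blast
    obtain w where w: "good n w" "C = mlt w" using structure_lem[OF assms] C A_def by blast
    have "w \<in> Z4vec n" using w unfolding good_def by auto
    then show "k \<in> {..<n}" using C w FF_mlt Ev_less by auto
  next
    fix k assume "k \<in> {..<n}"
    then have k: "k < n" by simp
    have "K n k \<in> Z4vec n" using K_props(1)[OF k] unfolding good_def by auto
    then have "FF n (mlt (K n k)) = k" using FF_mlt K_props(2)[OF k] by simp
    then show "k \<in> FF n ` A" using K_props(3)[OF k] A_def by (intro image_eqI[of k _ "mlt (K n k)"]) auto
  qed
  have cls: "R `` {x} = {D \<in> A. FF n D = FF n x}" if "x \<in> A" for x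
    using that key unfolding R_def by auto
  have "A // R = (\<lambda>x. R `` {x}) ` A" unfolding quotient_def by auto
  also have "\<dots> = (\<lambda>x. {D \<in> A. FF n D = FF n x}) ` A" using cls by (rule image_cong[OF refl])
  also have "\<dots> = (\<lambda>k. {D \<in> A. FF n D = k}) ` (FF n ` A)" by (simp add: image_image)
  finally have q: "A // R = (\<lambda>k. {D \<in> A. FF n D = k}) ` {..<n}" using rng by simp
  have inj: "inj_on (\<lambda>k. {D \<in> A. FF n D = k}) {..<n}"
  proof (rule inj_onI)
    fix k k' assume k: "k \<in> {..<n}" and "k' \<in> {..<n}"
      and e: "{D \<in> A. FF n D = k} = {D \<in> A. FF n D = k'}"
    have "k \<in> FF n ` A" using k rng by simp
    then obtain x where "x \<in> A" "FF n x = k" by blast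
    then show "k = k'" using e by blast
  qed
  have "card (A // R) = n" unfolding q using card_image[OF inj] by simp
  then show ?thesis unfolding Nprime_def A_def R_def .
qed

end
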